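(* Consider the continuous-time LPV system $$\dot x(t)=A(\rho)x(t)+B(\rho)u(t),\qquad y(t)=C(\rho)x(t),$$ with $x\in\mathbb{R}^n$, $u\in\mathbb{R}^m$, $y\in\mathbb{R}^p$, time-varying parameter $\rho(t)\in\Omega\subset\mathbb{R}^r$, and $A,B,C$ polynomial or rational in $\rho$. Assume it is given in the differential-algebraic representation (DAR) $$\dot x=A_1x+A_2\pi+A_3u,\qquad y=C_1x+C_2\pi,\qquad 0=\Upsilon_1(\rho)x+\Upsilon_2(\rho)\pi+\Upsilon_3(\rho)u,$$ as described in the context, with vertex matrices $\Upsilon_{1_i},\Upsilon_{2_i},\Upsilon_{3_i}$, $i=1,\dots,N$, and set $C_{d_i}=\begin{bmatrix}\Upsilon_{1_i}&\Upsilon_{2_i}&\Upsilon_{3_i}\end{bmatrix}$. Let a scalar $\beta$ be given. Suppose there exist symmetric matrices $P\succ0$ ($n\times n$), $H_i\succ0$ ($n\times n$), $R\succ0$ ($m\times m$), $Q_i$ ($p\times p$), matrices $S_i\in\mathbb{R}^{p\times m}$ ($i=1,\dots,N$), and a matrix $L\in\mathbb{R}^{(n+n_\pi+m)\times n_\pi}$ such that, for all $i=1,\dots,N$, $$Y_i+LC_{d_i}+C_{d_i}^\top L^\top\prec0,\qquad X_{d_i}+L_sC_{s_i}+C_{s_i}^\top L_s^\top\prec0,$$ where $$Y_i=\begin{bmatrix}PA_1+A_1^\top P-C_1^\top Q_iC_1+H_i&\star&\star\\ (PA_2-C_1^\top Q_iC_2)^\top&-C_2^\top Q_iC_2&\star\\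 (PA_3-C_1^\top S_i)^\top&-S_i^\top C_2&-R\end{bmatrix},\quad X_{d_i}=\begin{bmatrix}Q_i&S_i\\ S_i^\top&R\end{bmatrix},$$ $C_{s_i}=\begin{bmatrix}S_i^\top&R\end{bmatrix}$, and $L_s\in\mathbb{R}^{(p+m)\times m}$ is defined by $L_s^\top=\begin{bmatrix}\beta\mathbf{1}_{m\times p}&-I_m\end{bmatrix}$. Then the system is robust strictly QSR-dissipative for all $\rho(t)\in\Omega$ (with storage function $V(x)=x^\top Px$, $T(x,\rho)=x^\top H(\rho)x$, $H(\rho)=\sum_i\alpha_iH_i$, and supply-rate matrices $Q(\rho)=\sum_i\alpha_iQ_i$, $S(\rho)=\sum_i\alpha_iS_i$, $R$), and the gain-scheduled static output feedback $$u=K(\rho)y,\qquad K(\rho)=\sum_{i=1}^N\alpha_i(\rho)K_i,\qquad K_i=-R^{-1}S_i^\top,$$ asymptotically stabilizes the system around the origin for all $\rho\in\Omega$.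
   Context: Standing assumption: the parameter vector $\rho(t)\in\mathbb{R}^r$ is bounded and lies in a polytope $\Omega$ with $N=2^r$ vertices; every $\rho\in\Omega$ is written as a convex combination of the vertices with weights $\alpha(\rho)=(\alpha_1,\dots,\alpha_N)$, $\alpha_i\ge0$, $\sum_i\alpha_i=1$. DAR: $\pi=\pi(x,\rho,u)\in\mathbb{R}^{n_\pi}$ is an auxiliary vector collecting the terms depending nonlinearly on $\rho$; $A_1\in\mathbb{R}^{n\times n}$, $A_2\in\mathbb{R}^{n\times n_\pi}$, $A_3\in\mathbb{R}^{n\times m}$, $C_1\in\mathbb{R}^{p\times n}$, $C_2\in\mathbb{R}^{p\times n_\pi}$ are constant; $\Upsilon_1(\rho)\in\mathbb{R}^{n_\pi\times n}$, $\Upsilon_2(\rho)\in\mathbb{R}^{n_\pi\times n_\pi}$, $\Upsilon_3(\rho)\in\mathbb{R}^{n_\pi\times m}$ are affine in $\rho$, with $\Upsilon_2(\rho)$ invertible, and the DAR is an exact representation of the LPV system (eliminating $\pi$ via the algebraic equation recovers $A(\rho),B(\rho),C(\rho)$). Being affine, $\Upsilon_k(\rho)=\sum_{i=1}^N\alpha_i\Upsilon_{k_i}$, where $\Upsilon_{k_i}$ is the value at the $i$-th vertex. Notation: $\star$ denotes blocks determined by symmetry; $\mathbf{1}$ is an all-ones matrix. Robust strict QSR-dissipativity: with $V(x)=x^\top Px$, $T(x,\rho)=x^\top H(\rho)x$, the system is robust strictly QSR-dissipative if for all $\rho\in\Omega$ and all $(x,\pi,u)$ satisfying the DAR algebraic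 constraint, $t_d(x,u,\rho):=\nabla V^\top[A_1x+A_2\pi+A_3u]+x^\top H(\rho)x-y^\top Q(\rho)y-2y^\top S(\rho)u-u^\top Ru\le0$, where $y=C_1x+C_2\pi$. *)

theory Defs
  imports "HOL-Analysis.Analysis"
begin

definition blk2 :: "real^'b^'a \<Rightarrow> real^'d^'a \<Rightarrow> real^'b^'c \<Rightarrow> real^'d^'c
                     \<Rightarrow> real^('b + 'd)^('a + 'c)" where
  "blk2 M11 M12 M21 M22 = (\<chi> i j. (case i of
       Inl a \<Rightarrow> (case j of Inl b \<Rightarrow> M11 $ a $ b | Inr d \<Rightarrow> M12 $ a $ d)
     | Inr c \<Rightarrow> (case j of Inl b \<Rightarrow> M21 $ c $ b | Inr d \<Rightarrow> M22 $ c $ d)))"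

definition hcat :: "real^'b^'a \<Rightarrow> real^'d^'a \<Rightarrow> real^('b + 'd)^'a" where
  "hcat M1 M2 = (\<chi> i j. (case j of Inl b \<Rightarrow> M1 $ i $ b | Inr d \<Rightarrow> M2 $ i $ d))"

definition vcat :: "real^'b^'a \<Rightarrow> real^'b^'c \<Rightarrow> real^'b^('a + 'c)" where
  "vcat M1 M2 = (\<chi> i j. (case i of Inl a \<Rightarrow> M1 $ a $ j | Inr c \<Rightarrow> M2 $ c $ j))"

definition blk3sym ::
  "real^'n^'n \<Rightarrow> real^'n^'q \<Rightarrow> real^'q^'q \<Rightarrow> real^'n^'m \<Rightarrow> real^'q^'m \<Rightarrow> real^'m^'m
   \<Rightarrow> real^(('n + 'q) + 'm)^(('n + 'q) + 'm)" where
  "blk3sym M11 M21 M22 M31 M32 M33 =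
     blk2 (blk2 M11 (transpose M21) M21 M22)
          (vcat (transpose M31) (transpose M32))
          (hcat M31 M32) M33"

definition ones :: "real^'b^'a" where "ones = (\<chi> i j. 1)"

definition pos_def :: "real^'n^'n \<Rightarrow> bool" where
  "pos_def M \<longleftrightarrow> transpose M = M \<and> (\<forall>z. z \<noteq> 0 \<longrightarrow> z \<bullet> (M *v z) > 0)"

definition neg_def :: "real^'n^'n \<Rightarrow> bool" where
  "neg_def M \<longleftrightarrow> transpose M = M \<and> (\<forall>z. z \<noteq> 0 \<longrightarrow> z \<bullet> (M *v z) < 0)"

definition wsum :: "('v::finite \<Rightarrow> real) \<Rightarrow> ('v \<Rightarrow> 'a::real_vector) \<Rightarrow> 'a" where
  "wsum w M = (\<Sum>i\<in>UNIV. w i *\<^sub>R M i)"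

definition robust_strict_QSR_dissipative ::
  "(real^'r) set \<Rightarrow> (real^'r \<Rightarrow> 'v::finite \<Rightarrow> real)
   \<Rightarrow> real^'n^'n \<Rightarrow> real^'q^'n \<Rightarrow> real^'m^'n \<Rightarrow> real^'n^'p \<Rightarrow> real^'q^'p
   \<Rightarrow> ('v \<Rightarrow> real^'n^'q) \<Rightarrow> ('v \<Rightarrow> real^'q^'q) \<Rightarrow> ('v \<Rightarrow> real^'m^'q)
   \<Rightarrow> real^'n^'n \<Rightarrow> ('v \<Rightarrow> real^'n^'n) \<Rightarrow> ('v \<Rightarrow> real^'p^'p) \<Rightarrow> ('v \<Rightarrow> real^'m^'p)
   \<Rightarrow> real^'m^'m \<Rightarrow> bool" where
  "robust_strict_QSR_dissipative \<Omega> \<alpha> A1 A2 A3 C1 C2 Ups1 Ups2 Ups3 P H Q S R \<longleftrightarrow>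
     (\<forall>\<rho>\<in>\<Omega>. \<forall>x \<pi> u.
        wsum (\<alpha> \<rho>) Ups1 *v x + wsum (\<alpha> \<rho>) Ups2 *v \<pi> + wsum (\<alpha> \<rho>) Ups3 *v u = 0 \<longrightarrow>
        (let y = C1 *v x + C2 *v \<pi>;
             gradV = (P + transpose P) *v x
         in gradV \<bullet> (A1 *v x + A2 *v \<pi> + A3 *v u) + x \<bullet> (wsum (\<alpha> \<rho>) H *v x)
            - y \<bullet> (wsum (\<alpha> \<rho>) Q *v y) - 2 * (y \<bullet> (wsum (\<alpha> \<rho>) S *v u))
            - u \<bullet> (R *v u) \<le> 0))"

definition cl_solution ::
  "(real^'r \<Rightarrow> real^'n^'n) \<Rightarrow> (real^'r \<Rightarrow> real^'m^'n) \<Rightarrow> (real^'r \<Rightarrow> real^'n^'p)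
   \<Rightarrow> (real^'r \<Rightarrow> real^'p^'m) \<Rightarrow> (real \<Rightarrow> real^'r) \<Rightarrow> (real \<Rightarrow> real^'n) \<Rightarrow> bool" where
  "cl_solution A B C K \<rho> x \<longleftrightarrow>
     (\<forall>t\<ge>0. (x has_vector_derivative
               (A (\<rho> t) *v x t + B (\<rho> t) *v (K (\<rho> t) *v (C (\<rho> t) *v x t))))
             (at t within {0..}))"

definition asymptotically_stabilizes ::
  "(real^'r) set \<Rightarrow> (real^'r \<Rightarrow> real^'n^'n) \<Rightarrow> (real^'r \<Rightarrow> real^'m^'n)
   \<Rightarrow> (real^'r \<Rightarrow> real^'n^'p) \<Rightarrow> (real^'r \<Rightarrow> real^'p^'m) \<Rightarrow> bool" where
  "asymptotically_stabilizes \<Omega> A B C K \<longleftrightarrow>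
     (\<forall>\<rho>. (\<forall>t\<ge>0. \<rho> t \<in> \<Omega>) \<longrightarrow>
        (\<forall>\<epsilon>>0. \<exists>\<delta>>0. \<forall>x. cl_solution A B C K \<rho> x \<and> norm (x 0) < \<delta>
                         \<longrightarrow> (\<forall>t\<ge>0. norm (x t) < \<epsilon>)) \<and>
        (\<exists>\<delta>>0. \<forall>x. cl_solution A B C K \<rho> x \<and> norm (x 0) < \<delta>
                  \<longrightarrow> (x \<longlongrightarrow> 0) at_top))"

end

theory Submission
  imports Defs
begin


definition lft :: "real^('a::finite+'b::finite) \<Rightarrow> real^'a" where "lft z = (\<chi> a. z $ Inl a)"
definition rgt :: "real^('a::finite+'b::finite) \<Rightarrow> real^'b" where "rgt z = (\<chi> b. z $ Inr b)"
definition jn :: "real^'a::finite \<Rightarrow> real^'b::finite \<Rightarrow> real^('a+'b)" where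
  "jn x y = (\<chi> k. case k of Inl a \<Rightarrow> x $ a | Inr b \<Rightarrow> y $ b)"

lemma lft_jn[simp]: "lft (jn x y) = x" by (simp add: lft_def jn_def vec_eq_iff)
lemma rgt_jn[simp]: "rgt (jn x y) = y" by (simp add: rgt_def jn_def vec_eq_iff)

lemma sum_UNIV_Plus: "(\<Sum>k\<in>(UNIV::('a::finite+'b::finite) set). g k) = (\<Sum>a\<in>UNIV. g (Inl a)) + (\<Sum>b\<in>UNIV. g (Inr b))"
  using sum.Plus[of "UNIV::'a set" "UNIV::'b set" g] by (simp add: o_def)

lemma inner_Plus: "(z::real^('a::finite+'b::finite)) \<bullet> w = lft z \<bullet> lft w + rgt z \<bullet> rgt w"
  by (simp add: inner_vec_def sum_UNIV_Plus lft_def rgt_def)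

lemma jn_zero: "jn x y = 0 \<longleftrightarrow> x = 0 \<and> y = 0"
  by (auto simp: jn_def vec_eq_iff split: sum.splits)

lemma lft_blk2: "lft (blk2 M11 M12 M21 M22 *v z) = M11 *v lft z + M12 *v rgt z"
  by (simp add: lft_def rgt_def blk2_def matrix_vector_mult_def vec_eq_iff sum_UNIV_Plus)
lemma rgt_blk2: "rgt (blk2 M11 M12 M21 M22 *v z) = M21 *v lft z + M22 *v rgt z"
  by (simp add: lft_def rgt_def blk2_def matrix_vector_mult_def vec_eq_iff sum_UNIV_Plus)
lemma hcat_mv: "hcat M1 M2 *v z = M1 *v lft z + M2 *v rgt z"
  by (simp add: lft_def rgt_def hcat_def matrix_vector_mult_def vec_eq_iff sum_UNIV_Plus)
lemma lft_vcat: "lft (vcat M1 M2 *v z) = M1 *v z"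
  by (simp add: lft_def vcat_def matrix_vector_mult_def vec_eq_iff)
lemma rgt_vcat: "rgt (vcat M1 M2 *v z) = M2 *v z"
  by (simp add: rgt_def vcat_def matrix_vector_mult_def vec_eq_iff)

lemma dot_vm: "(x::real^'a) \<bullet> (y v* M) = (M *v x) \<bullet> y"
  by (metis inner_commute dot_lmul_matrix)
lemma dot_vm2: "(y v* M) \<bullet> (x::real^'a) = y \<bullet> (M *v x)"
  by (metis dot_lmul_matrix)
lemma dot_transpose: "(x::real^'a) \<bullet> (transpose M *v y) = (M *v x) \<bullet> y"
  by (simp add: dot_vm)
lemma dot_transpose2: "(transpose M *v y) \<bullet> (x::real^'a) = y \<bullet> (M *v x)"
  by (simp add: dot_vm2)

lemma quad_mult: "(z::real^'a) \<bullet> ((M ** N) *v z) = (transpose M *v z) \<bullet> (N *v z)"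
  by (simp add: dot_lmul_matrix matrix_vector_mul_assoc[symmetric])

lemma sum_mv: "finite I \<Longrightarrow> (sum f I) *v b = (\<Sum>i\<in>I. f i *v b)"
  by (induction I rule: finite_induct) (auto simp: matrix_vector_mult_add_rdistrib)

lemma wsum_mv: "wsum w M *v (b::real^'a) = (\<Sum>i\<in>UNIV. w i *\<^sub>R (M i *v b))"
  by (simp add: wsum_def sum_mv scaleR_matrix_vector_assoc)

lemma inner_wsum: "(a::real^'a) \<bullet> (wsum w M *v b) = (\<Sum>i\<in>UNIV. w i * (a \<bullet> (M i *v b)))"
  by (simp add: wsum_mv inner_sum_right)

lemma inv_right: "invertible (A::real^'n^'n) \<Longrightarrow> A ** matrix_inv A = mat 1"
  unfolding invertible_def matrix_inv_def by (rule someI_ex[THEN conjunct1])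
lemma inv_left: "invertible (A::real^'n^'n) \<Longrightarrow> matrix_inv A ** A = mat 1"
  unfolding invertible_def matrix_inv_def by (rule someI_ex[THEN conjunct2])

lemma transpose_diff: "transpose (A - B) = transpose A - transpose (B::real^'n^'m)"
  by (simp add: transpose_def vec_eq_iff)
lemma transpose_add: "transpose (A + B) = transpose A + transpose (B::real^'n^'m)"
  by (simp add: transpose_def vec_eq_iff)
lemma transpose_neg: "transpose (- A) = - transpose (A::real^'n^'m)"
  by (simp add: transpose_def vec_eq_iff)
lemma neg_mv: "(- A) *v x = - (A *v (x::real^'n))"
  by (simp add: matrix_vector_mult_def vec_eq_iff sum_negf)

lemma sym_swap: "transpose M = M \<Longrightarrow> (a::real^'n) \<bullet> (M *v b) = b \<bullet> (M *v a)"
  by (metis dot_transpose inner_commute)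

lemma pd_invertible: assumes "pos_def (R::real^'n^'n)" shows "invertible R"
proof -
  have "\<forall>x. R *v x = 0 \<longrightarrow> x = 0" using assms unfolding pos_def_def
    by (metis inner_zero_right less_irrefl)
  then show ?thesis using invertible_left_inverse matrix_left_invertible_ker by blast
qed

lemma nd_le: "neg_def M \<Longrightarrow> z \<bullet> (M *v z) \<le> 0"
  unfolding neg_def_def by (cases "z = 0") (auto intro: less_imp_le)

lemma lft_add: "lft (a + b) = lft a + lft b" by (simp add: lft_def vec_eq_iff)
lemma rgt_add: "rgt (a + b) = rgt a + rgt b" by (simp add: rgt_def vec_eq_iff)

lemma blk3_quad:
  "jn (jn x \<pi>) u \<bullet> (blk3sym M11 M21 M22 M31 M32 M33 *v jn (jn x \<pi>) u)
   = x \<bullet> (M11 *v x) + 2 * ((M21 *v x) \<bullet> \<pi>) + \<pi> \<bullet> (M22 *v \<pi>)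
     + 2 * ((M31 *v x) \<bullet> u) + 2 * ((M32 *v \<pi>) \<bullet> u) + u \<bullet> (M33 *v u)"
  unfolding blk3sym_def
  by (simp add: inner_Plus lft_blk2 rgt_blk2 hcat_mv lft_vcat rgt_vcat lft_add rgt_add
     inner_add_left inner_add_right dot_transpose dot_transpose2 dot_vm dot_vm2 algebra_simps inner_commute)

lemma blk2_quad:
  "jn y u \<bullet> (blk2 M11 M12 M21 M22 *v jn y u)
   = y \<bullet> (M11 *v y) + y \<bullet> (M12 *v u) + u \<bullet> (M21 *v y) + u \<bullet> (M22 *v u)"
  by (simp add: inner_Plus lft_blk2 rgt_blk2 inner_add_left inner_add_right)


lemma lin_comb:
  fixes w :: "'v::finite \<Rightarrow> real"
  assumes "(\<Sum>i\<in>UNIV. w i) = 1"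
  shows "(\<Sum>i\<in>UNIV. w i * (a + b i - c i - 2 * d i - e + 2 * g i))
     = a - e + (\<Sum>i\<in>UNIV. w i * b i) - (\<Sum>i\<in>UNIV. w i * c i) - 2 * (\<Sum>i\<in>UNIV. w i * d i)
       + 2 * (\<Sum>i\<in>UNIV. w i * g i)"
proof -
  have "(\<Sum>i\<in>UNIV. w i * (a + b i - c i - 2 * d i - e + 2 * g i))
    = (\<Sum>i\<in>UNIV. w i) * (a - e) + (\<Sum>i\<in>UNIV. w i * b i) - (\<Sum>i\<in>UNIV. w i * c i) - 2 * (\<Sum>i\<in>UNIV. w i * d i)
       + 2 * (\<Sum>i\<in>UNIV. w i * g i)"
    by (simp add: sum_distrib_left sum_distrib_right sum.distrib sum_subtractf algebra_simps)
  then show ?thesis using assms by simp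
qed

lemma lin_comb2:
  fixes w :: "'v::finite \<Rightarrow> real"
  assumes "(\<Sum>i\<in>UNIV. w i) = 1"
  shows "(\<Sum>i\<in>UNIV. w i * (b i + 2 * d i + e + 2 * g i))
     = e + (\<Sum>i\<in>UNIV. w i * b i) + 2 * (\<Sum>i\<in>UNIV. w i * d i) + 2 * (\<Sum>i\<in>UNIV. w i * g i)"
proof -
  have "(\<Sum>i\<in>UNIV. w i * (b i + 2 * d i + e + 2 * g i))
    = (\<Sum>i\<in>UNIV. w i) * e + (\<Sum>i\<in>UNIV. w i * b i) + 2 * (\<Sum>i\<in>UNIV. w i * d i) + 2 * (\<Sum>i\<in>UNIV. w i * g i)"
    by (simp add: sum_distrib_left sum_distrib_right sum.distrib sum_subtractf algebra_simps)
  then show ?thesis using assms by simp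
qed


lemma vertex_eq:
  fixes x :: "real^'n" and \<pi> :: "real^'q" and u :: "real^'m"
    and A1 :: "real^'n^'n" and A2 :: "real^'q^'n" and A3 :: "real^'m^'n"
    and C1 :: "real^'n^'p" and C2 :: "real^'q^'p"
    and U1 :: "real^'n^'q" and U2 :: "real^'q^'q" and U3 :: "real^'m^'q"
    and P Hi :: "real^'n^'n" and R :: "real^'m^'m" and Qi :: "real^'p^'p" and Si :: "real^'m^'p"
    and L :: "real^'q^(('n + 'q) + 'm)"
  assumes Psym: "transpose P = P" and Qsym: "transpose Qi = Qi"
  defines "\<xi> \<equiv> jn (jn x \<pi>) u"
  shows "\<xi> \<bullet> ((blk3sym (P ** A1 + transpose A1 ** P - transpose C1 ** Qi ** C1 + Hi)
                 (transpose (P ** A2 - transpose C1 ** Qi ** C2))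
                 (- (transpose C2 ** Qi ** C2))
                 (transpose (P ** A3 - transpose C1 ** Si))
                 (- (transpose Si ** C2))
                 (- R)
         + L ** hcat (hcat U1 U2) U3
         + transpose (hcat (hcat U1 U2) U3) ** transpose L) *v \<xi>)
   = 2 * ((P *v x) \<bullet> (A1 *v x + A2 *v \<pi> + A3 *v u)) + x \<bullet> (Hi *v x)
     - (C1 *v x + C2 *v \<pi>) \<bullet> (Qi *v (C1 *v x + C2 *v \<pi>))
     - 2 * ((C1 *v x + C2 *v \<pi>) \<bullet> (Si *v u)) - u \<bullet> (R *v u)
     + 2 * ((transpose L *v \<xi>) \<bullet> (U1 *v x + U2 *v \<pi> + U3 *v u))"
proof -
  have e1: "\<xi> \<bullet> ((L ** hcat (hcat U1 U2) U3) *v \<xi>) = (transpose L *v \<xi>) \<bullet> (U1 *v x + U2 *v \<pi> + U3 *v u)"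
    unfolding quad_mult \<xi>_def by (simp add: hcat_mv)
  have e2: "\<xi> \<bullet> ((transpose (hcat (hcat U1 U2) U3) ** transpose L) *v \<xi>) = (transpose L *v \<xi>) \<bullet> (U1 *v x + U2 *v \<pi> + U3 *v u)"
    unfolding quad_mult \<xi>_def by (simp add: hcat_mv inner_commute)
  show ?thesis
  unfolding matrix_vector_mult_add_rdistrib inner_add_right e1 e2
  unfolding \<xi>_def blk3_quad
  apply (simp add: transpose_diff transpose_add transpose_neg
     matrix_transpose_mul neg_mv matrix_vector_mult_diff_rdistrib matrix_vector_mult_add_rdistrib
     matrix_vector_mul_assoc[symmetric] inner_add_left inner_add_right inner_diff_left inner_diff_right
     dot_vm dot_vm2 Psym Qsym algebra_simps)
  using sym_swap[OF Psym, of x "A1 *v x"] sym_swap[OF Qsym, of "C1 *v x" "C2 *v \<pi>"]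
    inner_commute[of x "P *v (A1 *v x)"] inner_commute[of "A1 *v x" "P *v x"]
    inner_commute[of "C1 *v x" "Qi *v (C2 *v \<pi>)"] inner_commute[of "C2 *v \<pi>" "Qi *v (C1 *v x)"]
  by linarith
qed

lemma diss_point:
  fixes x :: "real^'n" and \<pi> :: "real^'q" and u :: "real^'m"
    and w :: "'v::finite \<Rightarrow> real"
    and A1 :: "real^'n^'n" and A2 :: "real^'q^'n" and A3 :: "real^'m^'n"
    and C1 :: "real^'n^'p" and C2 :: "real^'q^'p"
    and Ups1 :: "'v \<Rightarrow> real^'n^'q" and Ups2 :: "'v \<Rightarrow> real^'q^'q"
    and Ups3 :: "'v \<Rightarrow> real^'m^'q"
    and P :: "real^'n^'n" and H :: "'v \<Rightarrow> real^'n^'n" and R :: "real^'m^'m"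
    and Q :: "'v \<Rightarrow> real^'p^'p" and S :: "'v \<Rightarrow> real^'m^'p"
    and L :: "real^'q^(('n + 'q) + 'm)"
  assumes wnn: "\<And>i. w i \<ge> 0" and wsum1: "(\<Sum>i\<in>UNIV. w i) = 1"
    and Psym: "transpose P = P" and Qsym: "\<And>i. transpose (Q i) = Q i"
    and LMI1: "\<And>i. neg_def
        (blk3sym (P ** A1 + transpose A1 ** P - transpose C1 ** Q i ** C1 + H i)
                 (transpose (P ** A2 - transpose C1 ** Q i ** C2))
                 (- (transpose C2 ** Q i ** C2))
                 (transpose (P ** A3 - transpose C1 ** S i))
                 (- (transpose (S i) ** C2))
                 (- R)
         + L ** hcat (hcat (Ups1 i) (Ups2 i)) (Ups3 i)
         + transpose (hcat (hcat (Ups1 i) (Ups2 i)) (Ups3 i)) ** transpose L)"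
    and cons: "wsum w Ups1 *v x + wsum w Ups2 *v \<pi> + wsum w Ups3 *v u = 0"
  shows "((P + transpose P) *v x) \<bullet> (A1 *v x + A2 *v \<pi> + A3 *v u) + x \<bullet> (wsum w H *v x)
            - (C1 *v x + C2 *v \<pi>) \<bullet> (wsum w Q *v (C1 *v x + C2 *v \<pi>))
            - 2 * ((C1 *v x + C2 *v \<pi>) \<bullet> (wsum w S *v u))
            - u \<bullet> (R *v u) \<le> 0"
proof -
  define \<xi> where "\<xi> = jn (jn x \<pi>) u"
  define y where "y = C1 *v x + C2 *v \<pi>"
  define lam where "lam = transpose L *v \<xi>"
  have le: "(\<Sum>i\<in>UNIV. w i * (2 * ((P *v x) \<bullet> (A1 *v x + A2 *v \<pi> + A3 *v u)) + x \<bullet> (H i *v x)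
     - y \<bullet> (Q i *v y) - 2 * (y \<bullet> (S i *v u)) - u \<bullet> (R *v u)
     + 2 * (lam \<bullet> (Ups1 i *v x + Ups2 i *v \<pi> + Ups3 i *v u)))) \<le> 0"
  proof (rule sum_nonpos)
    fix i
    show "w i * (2 * ((P *v x) \<bullet> (A1 *v x + A2 *v \<pi> + A3 *v u)) + x \<bullet> (H i *v x)
     - y \<bullet> (Q i *v y) - 2 * (y \<bullet> (S i *v u)) - u \<bullet> (R *v u)
     + 2 * (lam \<bullet> (Ups1 i *v x + Ups2 i *v \<pi> + Ups3 i *v u))) \<le> 0"
      using vertex_eq[where Hi="H i" and Qi="Q i" and Si="S i" and ?U1.0="Ups1 i" and ?U2.0="Ups2 i" and ?U3.0="Ups3 i" and x=x and \<pi>=\<pi> and u=u and L=L and R=R and ?A1.0=A1 and ?A2.0=A2 and ?A3.0=A3 and ?C1.0=C1 and ?C2.0=C2, OF Psym Qsym[of i]]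
        nd_le[OF LMI1[of i], of \<xi>] wnn[of i]
      unfolding \<xi>_def y_def lam_def by (simp add: mult_nonneg_nonpos)
  qed
  have g0: "(\<Sum>i\<in>UNIV. w i * (lam \<bullet> (Ups1 i *v x + Ups2 i *v \<pi> + Ups3 i *v u))) = 0"
  proof -
    have "(\<Sum>i\<in>UNIV. w i * (lam \<bullet> (Ups1 i *v x + Ups2 i *v \<pi> + Ups3 i *v u)))
      = lam \<bullet> (wsum w Ups1 *v x + wsum w Ups2 *v \<pi> + wsum w Ups3 *v u)"
      by (simp add: inner_add_right inner_wsum sum.distrib algebra_simps)
    then show ?thesis using cons by simp
  qed
  have "((P + transpose P) *v x) \<bullet> (A1 *v x + A2 *v \<pi> + A3 *v u) = 2 * ((P *v x) \<bullet> (A1 *v x + A2 *v \<pi> + A3 *v u))"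
    by (simp only: Psym matrix_vector_mult_add_rdistrib inner_add_left mult_2)
  then show ?thesis
    using le unfolding lin_comb[OF wsum1] g0
    by (simp add: y_def inner_wsum)
qed

lemma mv_neg: "A *v (- x) = - (A *v (x::real^'n))"
  by (simp add: matrix_vector_mult_def vec_eq_iff sum_negf)

lemma vertex2_eq:
  fixes y :: "real^'p" and u :: "real^'m" and Qi :: "real^'p^'p" and Si :: "real^'m^'p"
    and R :: "real^'m^'m" and Ls :: "real^'m^('p + 'm)"
  shows "jn y u \<bullet> ((blk2 Qi Si (transpose Si) R + Ls ** hcat (transpose Si) R
          + transpose (hcat (transpose Si) R) ** transpose Ls) *v jn y u)
    = y \<bullet> (Qi *v y) + 2 * (y \<bullet> (Si *v u)) + u \<bullet> (R *v u)
      + 2 * ((transpose Ls *v jn y u) \<bullet> (transpose Si *v y + R *v u))"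
proof -
  have e1: "jn y u \<bullet> ((Ls ** hcat (transpose Si) R) *v jn y u) = (transpose Ls *v jn y u) \<bullet> (transpose Si *v y + R *v u)"
    unfolding quad_mult by (simp only: hcat_mv lft_jn rgt_jn)
  have e2: "jn y u \<bullet> ((transpose (hcat (transpose Si) R) ** transpose Ls) *v jn y u) = (transpose Ls *v jn y u) \<bullet> (transpose Si *v y + R *v u)"
    unfolding quad_mult transpose_transpose by (simp only: hcat_mv lft_jn rgt_jn inner_commute)
  have e3: "u \<bullet> (transpose Si *v y) = y \<bullet> (Si *v u)"
    by (metis dot_transpose inner_commute)
  show ?thesis
    unfolding matrix_vector_mult_add_rdistrib inner_add_right e1 e2 blk2_quad e3
    by simp
qed

lemma supply_point:
  fixes y :: "real^'p" and w :: "'v::finite \<Rightarrow> real"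
    and R :: "real^'m^'m" and Q :: "'v \<Rightarrow> real^'p^'p" and S :: "'v \<Rightarrow> real^'m^'p"
  assumes wnn: "\<And>i. w i \<ge> 0" and wsum1: "(\<Sum>i\<in>UNIV. w i) = 1"
    and R_pd: "pos_def R"
    and LMI2: "\<And>i. neg_def
        (blk2 (Q i) (S i) (transpose (S i)) R
         + vcat (\<beta> *\<^sub>R (ones :: real^'m^'p)) (- mat 1) ** hcat (transpose (S i)) R
         + transpose (hcat (transpose (S i)) R)
             ** transpose (vcat (\<beta> *\<^sub>R (ones :: real^'m^'p)) (- mat 1)))"
    and u_def: "u = wsum w (\<lambda>i. - (matrix_inv R ** transpose (S i))) *v y"
  shows "y \<bullet> (wsum w Q *v y) + 2 * (y \<bullet> (wsum w S *v u)) + u \<bullet> (R *v u) \<le> 0"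
proof -
  define Ls :: "real^'m^('p + 'm)" where "Ls = vcat (\<beta> *\<^sub>R (ones :: real^'m^'p)) (- mat 1)"
  define lam where "lam = transpose Ls *v jn y u"
  have le: "(\<Sum>i\<in>UNIV. w i * (y \<bullet> (Q i *v y) + 2 * (y \<bullet> (S i *v u)) + u \<bullet> (R *v u)
      + 2 * (lam \<bullet> (transpose (S i) *v y + R *v u)))) \<le> 0"
  proof (rule sum_nonpos)
    fix i
    show "w i * (y \<bullet> (Q i *v y) + 2 * (y \<bullet> (S i *v u)) + u \<bullet> (R *v u)
      + 2 * (lam \<bullet> (transpose (S i) *v y + R *v u))) \<le> 0"
      using vertex2_eq[of y u "Q i" "S i" R Ls] nd_le[OF LMI2[of i], of "jn y u"] wnn[of i]
      unfolding Ls_def lam_def by (simp add: mult_nonneg_nonpos)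
  qed
  have Ru: "R *v u = - (\<Sum>i\<in>UNIV. w i *\<^sub>R (transpose (S i) *v y))"
  proof -
    have RR: "R ** matrix_inv R = mat 1" using inv_right[OF pd_invertible[OF R_pd]] .
    have "R *v u = (\<Sum>i\<in>UNIV. w i *\<^sub>R (R *v (- (matrix_inv R ** transpose (S i)) *v y)))"
      unfolding u_def wsum_mv by (simp add: linear_sum[OF matrix_vector_mul_linear] matrix_vector_mult_scaleR)
    also have "\<dots> = (\<Sum>i\<in>UNIV. w i *\<^sub>R (- (transpose (S i) *v y)))"
      by (simp add: neg_mv mv_neg matrix_vector_mul_assoc matrix_mul_assoc RR del: transpose_matrix_vector)
    finally show ?thesis by (simp add: sum_negf)
  qed
  have g0: "(\<Sum>i\<in>UNIV. w i * (lam \<bullet> (transpose (S i) *v y + R *v u))) = 0"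
  proof -
    have "(\<Sum>i\<in>UNIV. w i * (lam \<bullet> (transpose (S i) *v y + R *v u)))
       = lam \<bullet> (\<Sum>i\<in>UNIV. w i *\<^sub>R (transpose (S i) *v y)) + (\<Sum>i\<in>UNIV. w i) * (lam \<bullet> (R *v u))"
      by (simp add: inner_add_right inner_sum_right sum.distrib sum_distrib_right algebra_simps del: transpose_matrix_vector)
    then show ?thesis using wsum1 Ru by simp
  qed
  show ?thesis
    using le unfolding lin_comb2[OF wsum1] g0
    by (simp add: inner_wsum)
qed



lemma pd_lower:
  assumes "pos_def (M::real^'n^'n)"
  shows "\<exists>c>0. \<forall>z. c * (norm z)^2 \<le> z \<bullet> (M *v z)"
proof -
  let ?S = "sphere (0::real^'n) 1"
  have cont: "continuous_on ?S (\<lambda>z. z \<bullet> (M *v z))"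
    by (intro continuous_intros linear_continuous_on matrix_vector_mul_bounded_linear)
  have ne: "?S \<noteq> {}"
    using vector_choose_size[of 1, where 'a="real^'n"] by auto
  obtain z0 where z0: "z0 \<in> ?S" and min: "\<And>y. y \<in> ?S \<Longrightarrow> z0 \<bullet> (M *v z0) \<le> y \<bullet> (M *v y)"
    using continuous_attains_inf[OF compact_sphere ne cont] by blast
  have z0nz: "z0 \<noteq> 0" using z0 by auto
  define c where "c = z0 \<bullet> (M *v z0)"
  have cpos: "c > 0" using assms z0nz unfolding pos_def_def c_def by blast
  have "c * (norm z)^2 \<le> z \<bullet> (M *v z)" for z
  proof (cases "z = 0")
    case True then show ?thesis by simp
  next
    case False
    define e where "e = (1 / norm z) *\<^sub>R z"
    have "e \<in> ?S" using False by (simp add: e_def)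
    then have "c \<le> e \<bullet> (M *v e)" using min c_def by blast
    also have "e \<bullet> (M *v e) = (1 / norm z)^2 * (z \<bullet> (M *v z))"
      by (simp add: e_def matrix_vector_mult_scaleR power2_eq_square)
    finally have "c \<le> (1 / norm z)^2 * (z \<bullet> (M *v z))" .
    then have "c * (norm z)^2 \<le> (1 / norm z)^2 * (z \<bullet> (M *v z)) * (norm z)^2"
      by (simp add: mult_right_mono)
    also have "\<dots> = z \<bullet> (M *v z)" using False by (simp add: power2_eq_square field_simps)
    finally show ?thesis .
  qed
  then show ?thesis using cpos by blast
qed

lemma quad_upper:
  "\<exists>K>0. \<forall>z. z \<bullet> ((M::real^'n^'n) *v z) \<le> K * (norm z)^2"
proof -
  obtain K where K: "K > 0" "\<And>x. norm (M *v x) \<le> norm x * K"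
    using bounded_linear.pos_bounded[OF matrix_vector_mul_bounded_linear[of M]] by blast
  have "z \<bullet> (M *v z) \<le> K * (norm z)^2" for z
  proof -
    have "z \<bullet> (M *v z) \<le> norm z * norm (M *v z)" by (rule norm_cauchy_schwarz)
    also have "\<dots> \<le> norm z * (norm z * K)" by (rule mult_left_mono[OF K(2)]) simp
    finally show ?thesis by (simp add: power2_eq_square algebra_simps)
  qed
  then show ?thesis using K by blast
qed

lemma decay:
  fixes V D :: "real \<Rightarrow> real"
  assumes der: "\<And>t. t \<ge> 0 \<Longrightarrow> (V has_real_derivative D t) (at t within {0..})"
    and le: "\<And>t. t \<ge> 0 \<Longrightarrow> D t \<le> - c * V t"
    and t: "t \<ge> 0"
  shows "V t \<le> exp (- c * t) * V 0"
proof -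
  define f where "f s = exp (c * s) * V s" for s
  define f' where "f' s = exp (c * s) * (c * V s + D s)" for s
  have fd: "(f has_real_derivative f' s) (at s within {0..})" if "s \<ge> 0" for s
    unfolding f_def f'_def
    by (rule derivative_eq_intros der that refl | simp add: algebra_simps)+
  have "\<exists>s\<in>{0..t}. f t - f 0 = (\<lambda>h. h * f' s) (t - 0)"
  proof (rule mvt_very_simple[OF t])
    fix s assume "0 \<le> s" "s \<le> t"
    have e: "(\<lambda>h. h * f' s) = (*) (f' s)" by (auto simp: fun_eq_iff)
    show "(f has_derivative (\<lambda>h. h * f' s)) (at s within {0..t})"
      unfolding e using fd[of s] has_derivative_subset[of f _ s "{0..}" "{0..t}"] \<open>0 \<le> s\<close>
      by (auto simp: has_field_derivative_def)
  qed
  then obtain s where s: "s \<in> {0..t}" "f t - f 0 = t * f' s" by auto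
  have "f' s \<le> 0" using le[of s] s(1) unfolding f'_def
    by (intro mult_nonneg_nonpos) auto
  then have "t * f' s \<le> 0" using t by (simp add: mult_nonneg_nonpos)
  then have "f t \<le> f 0" using s(2) by linarith
  then have "exp (c * t) * V t \<le> V 0" by (simp add: f_def)
  then have "exp (- c * t) * (exp (c * t) * V t) \<le> exp (- c * t) * V 0"
    by (simp add: mult_left_mono)
  then show ?thesis by (simp add: exp_minus field_simps)
qed

lemma exp_lim: assumes "(c::real) > 0" shows "((\<lambda>t. exp (- c * t)) \<longlongrightarrow> 0) at_top"
proof -
  have "filterlim (\<lambda>t. c * t) at_top at_top"
    by (rule filterlim_tendsto_pos_mult_at_top[OF tendsto_const assms filterlim_ident])
  then have "filterlim (\<lambda>t. - (c * t)) at_bot at_top"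
    by (simp add: filterlim_uminus_at_bot)
  then show ?thesis using filterlim_compose[OF exp_at_bot] by simp
qed

theorem theorem1:
  fixes \<Omega> :: "(real^'r) set"
    and vert :: "'v::finite \<Rightarrow> real^'r"
    and \<alpha> :: "real^'r \<Rightarrow> 'v \<Rightarrow> real"
    and A :: "real^'r \<Rightarrow> real^'n^'n" and B :: "real^'r \<Rightarrow> real^'m^'n"
    and C :: "real^'r \<Rightarrow> real^'n^'p"
    and A1 :: "real^'n^'n" and A2 :: "real^'q^'n" and A3 :: "real^'m^'n"
    and C1 :: "real^'n^'p" and C2 :: "real^'q^'p"
    and Ups1 :: "'v \<Rightarrow> real^'n^'q" and Ups2 :: "'v \<Rightarrow> real^'q^'q"
    and Ups3 :: "'v \<Rightarrow> real^'m^'q"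
    and \<beta> :: real
    and P :: "real^'n^'n" and H :: "'v \<Rightarrow> real^'n^'n" and R :: "real^'m^'m"
    and Q :: "'v \<Rightarrow> real^'p^'p" and S :: "'v \<Rightarrow> real^'m^'p"
    and L :: "real^'q^(('n + 'q) + 'm)"
  assumes N_vertices: "CARD('v) = 2 ^ CARD('r)"
    and Omega_polytope: "\<Omega> = convex hull (range vert)"
    and alpha_nonneg: "\<And>\<rho> i. \<rho> \<in> \<Omega> \<Longrightarrow> \<alpha> \<rho> i \<ge> 0"
    and alpha_sum: "\<And>\<rho>. \<rho> \<in> \<Omega> \<Longrightarrow> (\<Sum>i\<in>UNIV. \<alpha> \<rho> i) = 1"
    and alpha_coords: "\<And>\<rho>. \<rho> \<in> \<Omega> \<Longrightarrow> \<rho> = (\<Sum>i\<in>UNIV. \<alpha> \<rho> i *\<^sub>R vert i)"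
    and Ups2_inv: "\<And>\<rho>. \<rho> \<in> \<Omega> \<Longrightarrow> invertible (wsum (\<alpha> \<rho>) Ups2)"
    and exact_A: "\<And>\<rho>. \<rho> \<in> \<Omega> \<Longrightarrow>
        A \<rho> = A1 - A2 ** matrix_inv (wsum (\<alpha> \<rho>) Ups2) ** wsum (\<alpha> \<rho>) Ups1"
    and exact_B: "\<And>\<rho>. \<rho> \<in> \<Omega> \<Longrightarrow>
        B \<rho> = A3 - A2 ** matrix_inv (wsum (\<alpha> \<rho>) Ups2) ** wsum (\<alpha> \<rho>) Ups3"
    and exact_C: "\<And>\<rho>. \<rho> \<in> \<Omega> \<Longrightarrow>
        C \<rho> = C1 - C2 ** matrix_inv (wsum (\<alpha> \<rho>) Ups2) ** wsum (\<alpha> \<rho>) Ups1"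
    and exact_D: "\<And>\<rho>. \<rho> \<in> \<Omega> \<Longrightarrow>
        C2 ** matrix_inv (wsum (\<alpha> \<rho>) Ups2) ** wsum (\<alpha> \<rho>) Ups3 = 0"
    and P_pd: "pos_def P"
    and H_pd: "\<And>i. pos_def (H i)"
    and R_pd: "pos_def R"
    and Q_sym: "\<And>i. transpose (Q i) = Q i"
    and LMI1: "\<And>i. neg_def
        (blk3sym (P ** A1 + transpose A1 ** P - transpose C1 ** Q i ** C1 + H i)
                 (transpose (P ** A2 - transpose C1 ** Q i ** C2))
                 (- (transpose C2 ** Q i ** C2))
                 (transpose (P ** A3 - transpose C1 ** S i))
                 (- (transpose (S i) ** C2))
                 (- R)
         + L ** hcat (hcat (Ups1 i) (Ups2 i)) (Ups3 i)
         + transpose (hcat (hcat (Ups1 i) (Ups2 i)) (Ups3 i)) ** transpose L)"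
    and LMI2: "\<And>i. neg_def
        (blk2 (Q i) (S i) (transpose (S i)) R
         + vcat (\<beta> *\<^sub>R (ones :: real^'m^'p)) (- mat 1) ** hcat (transpose (S i)) R
         + transpose (hcat (transpose (S i)) R)
             ** transpose (vcat (\<beta> *\<^sub>R (ones :: real^'m^'p)) (- mat 1)))"
  shows "robust_strict_QSR_dissipative \<Omega> \<alpha> A1 A2 A3 C1 C2 Ups1 Ups2 Ups3 P H Q S R
         \<and> asymptotically_stabilizes \<Omega> A B C
             (\<lambda>\<rho>. wsum (\<alpha> \<rho>) (\<lambda>i. - (matrix_inv R ** transpose (S i))))"
proof -
  have Psym: "transpose P = P" using P_pd unfolding pos_def_def by blast
  have diss: "robust_strict_QSR_dissipative \<Omega> \<alpha> A1 A2 A3 C1 C2 Ups1 Ups2 Ups3 P H Q S R"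
    unfolding robust_strict_QSR_dissipative_def Let_def
  proof (intro ballI allI impI)
    fix \<rho> x \<pi> u
    assume \<rho>: "\<rho> \<in> \<Omega>"
      and cons: "wsum (\<alpha> \<rho>) Ups1 *v x + wsum (\<alpha> \<rho>) Ups2 *v \<pi> + wsum (\<alpha> \<rho>) Ups3 *v u = 0"
    show "((P + transpose P) *v x) \<bullet> (A1 *v x + A2 *v \<pi> + A3 *v u) + x \<bullet> (wsum (\<alpha> \<rho>) H *v x)
            - (C1 *v x + C2 *v \<pi>) \<bullet> (wsum (\<alpha> \<rho>) Q *v (C1 *v x + C2 *v \<pi>))
            - 2 * ((C1 *v x + C2 *v \<pi>) \<bullet> (wsum (\<alpha> \<rho>) S *v u))
            - u \<bullet> (R *v u) \<le> 0"
      by (rule diss_point[OF alpha_nonneg[OF \<rho>] alpha_sum[OF \<rho>] Psym Q_sym LMI1 cons])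
  qed
  define Kf where "Kf = (\<lambda>\<rho>. wsum (\<alpha> \<rho>) (\<lambda>i. - (matrix_inv R ** transpose (S i))))"
  have "\<forall>i. \<exists>c>0. \<forall>z. c * (norm z)^2 \<le> z \<bullet> (H i *v z)"
    using pd_lower[OF H_pd] by blast
  then obtain hc where hc: "\<And>i. hc i > 0" "\<And>i z. hc i * (norm z)^2 \<le> z \<bullet> (H i *v z)"
    using choice[of "\<lambda>i c. c > 0 \<and> (\<forall>z. c * (norm z)^2 \<le> z \<bullet> (H i *v z))"] by blast
  define h where "h = Min (range hc)"
  have hpos: "h > 0" unfolding h_def using hc(1) by (simp add: Min_gr_iff)
  have hle: "h \<le> hc i" for i unfolding h_def by (rule Min_le) auto
  have Hlow: "h * (norm z)^2 \<le> z \<bullet> (wsum (\<alpha> \<rho>) H *v z)" if \<rho>: "\<rho> \<in> \<Omega>" for \<rho> z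
  proof -
    have "h * (norm z)^2 = (\<Sum>i\<in>UNIV. \<alpha> \<rho> i * (h * (norm z)^2))"
      using alpha_sum[OF \<rho>] by (simp add: sum_distrib_right[symmetric])
    also have "\<dots> \<le> (\<Sum>i\<in>UNIV. \<alpha> \<rho> i * (z \<bullet> (H i *v z)))"
    proof (rule sum_mono)
      fix i
      have "h * (norm z)^2 \<le> hc i * (norm z)^2" using hle[of i] by (simp add: mult_right_mono)
      also have "\<dots> \<le> z \<bullet> (H i *v z)" by (rule hc(2))
      finally show "\<alpha> \<rho> i * (h * (norm z)^2) \<le> \<alpha> \<rho> i * (z \<bullet> (H i *v z))"
        using alpha_nonneg[OF \<rho>] by (simp add: mult_left_mono)
    qed
    also have "\<dots> = z \<bullet> (wsum (\<alpha> \<rho>) H *v z)" by (simp add: inner_wsum)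
    finally show ?thesis .
  qed
  obtain p where p: "p > 0" "\<And>z. p * (norm z)^2 \<le> z \<bullet> (P *v z)"
    using pd_lower[OF P_pd] by blast
  obtain Kp where Kp: "Kp > 0" "\<And>z. z \<bullet> (P *v z) \<le> Kp * (norm z)^2"
    using quad_upper[of P] by blast
  have key: "2 * ((P *v z) \<bullet> (A \<rho> *v z + B \<rho> *v (Kf \<rho> *v (C \<rho> *v z)))) \<le> - h * (norm z)^2"
    if \<rho>: "\<rho> \<in> \<Omega>" for \<rho> z
  proof -
    define U1 where "U1 = wsum (\<alpha> \<rho>) Ups1"
    define U2 where "U2 = wsum (\<alpha> \<rho>) Ups2"
    define U3 where "U3 = wsum (\<alpha> \<rho>) Ups3"
    define Ui where "Ui = matrix_inv U2"
    define y where "y = C \<rho> *v z"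
    define u where "u = Kf \<rho> *v y"
    define \<pi> where "\<pi> = - (Ui *v (U1 *v z + U3 *v u))"
    have UU: "U2 ** Ui = mat 1" unfolding Ui_def U2_def by (rule inv_right[OF Ups2_inv[OF \<rho>]])
    have cons: "U1 *v z + U2 *v \<pi> + U3 *v u = 0"
      unfolding \<pi>_def by (simp add: mv_neg matrix_vector_mul_assoc UU)
    have D0: "C2 *v (Ui *v (U3 *v u)) = 0"
      using exact_D[OF \<rho>] unfolding Ui_def U2_def U3_def
      by (metis matrix_vector_mul_assoc matrix_vector_mult_0)
    have yeq: "y = C1 *v z + C2 *v \<pi>"
      unfolding y_def exact_C[OF \<rho>] \<pi>_def
      using D0[unfolded Ui_def U2_def U3_def]
      by (simp add: mv_neg matrix_vector_mult_diff_rdistrib matrix_vector_right_distrib matrix_vector_mult_diff_distrib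
         matrix_vector_mul_assoc[symmetric] Ui_def U1_def U2_def U3_def)
    have xdot: "A \<rho> *v z + B \<rho> *v u = A1 *v z + A2 *v \<pi> + A3 *v u"
      unfolding exact_A[OF \<rho>] exact_B[OF \<rho>] \<pi>_def
      by (simp add: mv_neg matrix_vector_mult_diff_rdistrib matrix_vector_right_distrib
         matrix_vector_mul_assoc[symmetric] Ui_def U1_def U2_def U3_def algebra_simps)
    have d: "((P + transpose P) *v z) \<bullet> (A1 *v z + A2 *v \<pi> + A3 *v u) + z \<bullet> (wsum (\<alpha> \<rho>) H *v z)
            - y \<bullet> (wsum (\<alpha> \<rho>) Q *v y) - 2 * (y \<bullet> (wsum (\<alpha> \<rho>) S *v u))
            - u \<bullet> (R *v u) \<le> 0"
      unfolding yeq
      by (rule diss_point[OF alpha_nonneg[OF \<rho>] alpha_sum[OF \<rho>] Psym Q_sym LMI1 cons[unfolded U1_def U2_def U3_def]])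
    have s: "y \<bullet> (wsum (\<alpha> \<rho>) Q *v y) + 2 * (y \<bullet> (wsum (\<alpha> \<rho>) S *v u)) + u \<bullet> (R *v u) \<le> 0"
      by (rule supply_point[OF alpha_nonneg[OF \<rho>] alpha_sum[OF \<rho>] R_pd LMI2]) (simp add: u_def Kf_def)
    have g: "((P + transpose P) *v z) \<bullet> v = 2 * ((P *v z) \<bullet> v)" for v
      by (simp only: Psym matrix_vector_mult_add_rdistrib inner_add_left mult_2)
    have "2 * ((P *v z) \<bullet> (A \<rho> *v z + B \<rho> *v u)) \<le> - h * (norm z)^2"
      using d s Hlow[OF \<rho>, of z] unfolding g xdot by linarith
    then show ?thesis unfolding u_def y_def .
  qed
  have bound: "p * (norm (x t))^2 \<le> exp (- (h/Kp) * t) * (Kp * (norm (x 0))^2)"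
    if \<rho>: "\<forall>t\<ge>0. \<rho> t \<in> \<Omega>" and sol: "cl_solution A B C Kf \<rho> x" and t: "t \<ge> 0" for \<rho> x t
  proof -
    define v where "v s = A (\<rho> s) *v x s + B (\<rho> s) *v (Kf (\<rho> s) *v (C (\<rho> s) *v x s))" for s
    define V where "V s = x s \<bullet> (P *v x s)" for s
    define D where "D s = 2 * ((P *v x s) \<bullet> v s)" for s
    have der: "(V has_real_derivative D s) (at s within {0..})" if "s \<ge> 0" for s
    proof -
      have xd: "(x has_derivative (\<lambda>h. h *\<^sub>R v s)) (at s within {0..})"
        using sol that unfolding cl_solution_def v_def has_vector_derivative_def by blast
      have "(V has_derivative (\<lambda>h. x s \<bullet> (P *v (h *\<^sub>R v s)) + (h *\<^sub>R v s) \<bullet> (P *v x s))) (at s within {0..})"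
        unfolding V_def
        by (rule has_derivative_inner[OF xd bounded_linear.has_derivative[OF matrix_vector_mul_bounded_linear xd]])
      moreover have "(\<lambda>h. x s \<bullet> (P *v (h *\<^sub>R v s)) + (h *\<^sub>R v s) \<bullet> (P *v x s)) = (*) (D s)"
        using sym_swap[OF Psym, of "x s" "v s"]
        by (auto simp: fun_eq_iff D_def matrix_vector_mult_scaleR algebra_simps inner_commute)
      ultimately show ?thesis unfolding has_field_derivative_def by simp
    qed
    have Dle: "D s \<le> - (h/Kp) * V s" if "s \<ge> 0" for s
    proof -
      have "D s \<le> - h * (norm (x s))^2" unfolding D_def v_def
        using key[OF \<rho>[rule_format, OF that]] .
      moreover have "(h/Kp) * V s \<le> h * (norm (x s))^2"
      proof -
        have "(h/Kp) * V s \<le> (h/Kp) * (Kp * (norm (x s))^2)" unfolding V_def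
          using Kp hpos by (intro mult_left_mono) auto
        then show ?thesis using Kp by simp
      qed
      ultimately show ?thesis by simp
    qed
    have "V t \<le> exp (- (h/Kp) * t) * V 0" by (rule decay[OF der Dle t])
    moreover have "p * (norm (x t))^2 \<le> V t" unfolding V_def by (rule p(2))
    moreover have "exp (- (h/Kp) * t) * V 0 \<le> exp (- (h/Kp) * t) * (Kp * (norm (x 0))^2)"
      unfolding V_def by (rule mult_left_mono[OF Kp(2)]) simp
    ultimately show ?thesis by linarith
  qed
  have stab: "asymptotically_stabilizes \<Omega> A B C Kf"
    unfolding asymptotically_stabilizes_def
  proof (intro allI impI, intro conjI)
    fix \<rho> :: "real \<Rightarrow> real^'r" assume \<rho>: "\<forall>t\<ge>0. \<rho> t \<in> \<Omega>"
    define M where "M = Kp / p"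
    have Mpos: "M > 0" using Kp p by (simp add: M_def)
    have sq: "(norm (x t))^2 \<le> M * (norm (x 0))^2 * exp (- (h/Kp) * t)"
      if "cl_solution A B C Kf \<rho> x" "t \<ge> 0" for x t
    proof -
      have "p * (norm (x t))^2 \<le> exp (- (h/Kp) * t) * (Kp * (norm (x 0))^2)" by (rule bound[OF \<rho> that])
      then show ?thesis using p(1) by (simp add: M_def field_simps)
    qed
    show "\<forall>\<epsilon>>0. \<exists>\<delta>>0. \<forall>x. cl_solution A B C Kf \<rho> x \<and> norm (x 0) < \<delta> \<longrightarrow> (\<forall>t\<ge>0. norm (x t) < \<epsilon>)"
    proof (intro allI impI)
      fix \<epsilon> :: real assume \<epsilon>: "\<epsilon> > 0"
      define \<delta> where "\<delta> = \<epsilon> / sqrt M"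
      have \<delta>pos: "\<delta> > 0" using \<epsilon> Mpos by (simp add: \<delta>_def)
      have M\<delta>: "M * \<delta>^2 = \<epsilon>^2" using Mpos by (simp add: \<delta>_def power_divide)
      show "\<exists>\<delta>>0. \<forall>x. cl_solution A B C Kf \<rho> x \<and> norm (x 0) < \<delta> \<longrightarrow> (\<forall>t\<ge>0. norm (x t) < \<epsilon>)"
      proof (intro exI[of _ \<delta>] conjI allI impI \<delta>pos)
        fix x and t :: real
        assume a: "cl_solution A B C Kf \<rho> x \<and> norm (x 0) < \<delta>" and t: "t \<ge> 0"
        have e1: "exp (- (h/Kp) * t) \<le> 1" using t hpos Kp by simp
        have "(norm (x t))^2 \<le> M * (norm (x 0))^2 * exp (- (h/Kp) * t)" using sq a t by blast
        also have "\<dots> \<le> M * (norm (x 0))^2" using e1 Mpos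
          by (simp add: mult_left_le)
        also have "\<dots> < M * \<delta>^2" using a Mpos
          by (intro mult_strict_left_mono power_strict_mono) auto
        also have "\<dots> = \<epsilon>^2" by (rule M\<delta>)
        finally have "(norm (x t))^2 < \<epsilon>^2" .
        then show "norm (x t) < \<epsilon>" using \<epsilon> by (simp add: power_less_imp_less_base)
      qed
    qed
    show "\<exists>\<delta>>0. \<forall>x. cl_solution A B C Kf \<rho> x \<and> norm (x 0) < \<delta> \<longrightarrow> (x \<longlongrightarrow> 0) at_top"
    proof (intro exI[of _ 1] conjI allI impI)
      fix x assume a: "cl_solution A B C Kf \<rho> x \<and> norm (x 0) < 1"
      show "(x \<longlongrightarrow> 0) at_top"
      proof (rule Lim_null_comparison)
        show "eventually (\<lambda>t. norm (x t) \<le> sqrt (M * (norm (x 0))^2 * exp (- (h/Kp) * t))) at_top"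
          using eventually_ge_at_top[of 0]
        proof (rule eventually_mono)
          fix t :: real assume "t \<ge> 0"
          then have "(norm (x t))^2 \<le> M * (norm (x 0))^2 * exp (- (h/Kp) * t)" using sq a by blast
          then have "sqrt ((norm (x t))^2) \<le> sqrt (M * (norm (x 0))^2 * exp (- (h/Kp) * t))"
            by (rule real_sqrt_le_mono)
          then show "norm (x t) \<le> sqrt (M * (norm (x 0))^2 * exp (- (h/Kp) * t))" by simp
        qed
        have "((\<lambda>t. M * (norm (x 0))^2 * exp (- (h/Kp) * t)) \<longlongrightarrow> M * (norm (x 0))^2 * 0) at_top"
          by (intro tendsto_mult tendsto_const exp_lim) (use hpos Kp in simp)
        then have "((\<lambda>t. sqrt (M * (norm (x 0))^2 * exp (- (h/Kp) * t))) \<longlongrightarrow> sqrt (M * (norm (x 0))^2 * 0)) at_top"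
          by (rule tendsto_real_sqrt)
        then show "((\<lambda>t. sqrt (M * (norm (x 0))^2 * exp (- (h/Kp) * t))) \<longlongrightarrow> 0) at_top" by simp
      qed
    qed simp
  qed
  show ?thesis using diss stab unfolding Kf_def by simp
qed

end
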